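(* Let $m,n$ be positive integers with $n \geq m$, and let $G = K_m \otimes K_n$. Then: (1) If $m=n=2$, then $G$ is disconnected. (2) If $m \geq 3$ and $n \leq 2m-2$, then $\dim(G) = \left\lceil \frac{2}{3}(m+n-2) \right\rceil$. (3) If $m \geq 2$ and $n \geq 2m-1$, then $\dim(G) = n-1$.
   Context: $K_r$ denotes the complete graph (clique) on $r$ vertices. The tensor product $G \otimes H$ of simple graphs $G,H$ has vertex set $V(G)\times V(H)$, with $(u,v)$ adjacent to $(x,y)$ if and only if $ux \in E(G)$ and $vy \in E(H)$. For a connected graph $G$ with distance function $d$, and an ordered set $W=\{w_1,\dots,w_k\}\subseteq V(G)$, the metric representation of a vertex $v$ is $r(v\mid W)=(d(v,w_1),\dots,d(v,w_k))$. $W$ is a resolving set if distinct vertices have distinct representations; the metric dimension $\dim(G)$ is the minimum cardinality of a resolving set. *)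

theory Defs
  imports Complex_Main
begin

text \<open>A simple graph is given by a vertex set V and a symmetric irreflexive
adjacency relation E (only its restriction to V matters).\<close>

fun walk_of_len :: "'a set \<Rightarrow> ('a \<Rightarrow> 'a \<Rightarrow> bool) \<Rightarrow> nat \<Rightarrow> 'a \<Rightarrow> 'a \<Rightarrow> bool" where
  "walk_of_len V E 0 u v = (u \<in> V \<and> u = v)"
| "walk_of_len V E (Suc k) u v = (u \<in> V \<and> (\<exists>w\<in>V. E u w \<and> walk_of_len V E k w v))"

definition graph_connected :: "'a set \<Rightarrow> ('a \<Rightarrow> 'a \<Rightarrow> bool) \<Rightarrow> bool" where
  "graph_connected V E \<longleftrightarrow> (\<forall>u\<in>V. \<forall>v\<in>V. \<exists>k. walk_of_len V E k u v)"

definition gdist :: "'a set \<Rightarrow> ('a \<Rightarrow> 'a \<Rightarrow> bool) \<Rightarrow> 'a \<Rightarrow> 'a \<Rightarrow> nat" where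
  "gdist V E u v = (LEAST k. walk_of_len V E k u v)"

text \<open>W resolves the graph: distinct vertices have distinct distance vectors to W.
(Comparing the ordered representation vectors is the same as comparing all distances to W.)\<close>
definition resolving_set :: "'a set \<Rightarrow> ('a \<Rightarrow> 'a \<Rightarrow> bool) \<Rightarrow> 'a set \<Rightarrow> bool" where
  "resolving_set V E W \<longleftrightarrow> W \<subseteq> V \<and>
     (\<forall>u\<in>V. \<forall>v\<in>V. (\<forall>w\<in>W. gdist V E u w = gdist V E v w) \<longrightarrow> u = v)"

definition metric_dim :: "'a set \<Rightarrow> ('a \<Rightarrow> 'a \<Rightarrow> bool) \<Rightarrow> nat" where
  "metric_dim V E = (LEAST k. \<exists>W. finite W \<and> card W = k \<and> resolving_set V E W)"

definition K_verts :: "nat \<Rightarrow> nat set" where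
  "K_verts r = {0..<r}"

definition K_adj :: "nat \<Rightarrow> nat \<Rightarrow> bool" where
  "K_adj x y \<longleftrightarrow> x \<noteq> y"

definition tensor_verts :: "'a set \<Rightarrow> 'b set \<Rightarrow> ('a \<times> 'b) set" where
  "tensor_verts VG VH = VG \<times> VH"

definition tensor_adj :: "('a \<Rightarrow> 'a \<Rightarrow> bool) \<Rightarrow> ('b \<Rightarrow> 'b \<Rightarrow> bool) \<Rightarrow> 'a \<times> 'b \<Rightarrow> 'a \<times> 'b \<Rightarrow> bool" where
  "tensor_adj EG EH p q \<longleftrightarrow> EG (fst p) (fst q) \<and> EH (snd p) (snd q)"

end

theory Submission
  imports Defs
begin


abbreviation VV :: "nat \<Rightarrow> nat \<Rightarrow> (nat \<times> nat) set" where
  "VV m n \<equiv> {0..<m} \<times> {0..<n}"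
abbreviation EE :: "nat \<times> nat \<Rightarrow> nat \<times> nat \<Rightarrow> bool" where
  "EE \<equiv> (\<lambda>u w. fst u \<noteq> fst w \<and> snd u \<noteq> snd w)"

definition dd :: "nat \<Rightarrow> nat \<times> nat \<Rightarrow> nat \<times> nat \<Rightarrow> nat" where
  "dd m u w = (if u = w then 0 else if fst u \<noteq> fst w \<and> snd u \<noteq> snd w then 1
     else if fst u = fst w then 2 else if m = 2 then 3 else 2)"

lemma other1: "2 \<le> (m::nat) \<Longrightarrow> \<exists>x<m. x \<noteq> a"
  by (rule exI[of _ "if a = 0 then 1 else 0"]) auto

lemma other1b: "3 \<le> (m::nat) \<Longrightarrow> \<exists>x<m. x \<noteq> a \<and> x \<noteq> c"
proof -
  assume "3 \<le> m"
  show ?thesis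
  proof (cases "0 \<noteq> a \<and> 0 \<noteq> c")
    case True then show ?thesis using \<open>3 \<le> m\<close> by (intro exI[of _ 0]) auto
  next
    case f1: False
    show ?thesis
    proof (cases "1 \<noteq> a \<and> 1 \<noteq> c")
      case True then show ?thesis using \<open>3 \<le> m\<close> by (intro exI[of _ 1]) auto
    next
      case False then show ?thesis using f1 \<open>3 \<le> m\<close> by (intro exI[of _ 2]) auto
    qed
  qed
qed

lemma gdist_eqI:
  assumes "walk_of_len V E k u v" "\<And>j. j < k \<Longrightarrow> \<not> walk_of_len V E j u v"
  shows "gdist V E u v = k"
  unfolding gdist_def
proof (rule Least_equality)
  show "walk_of_len V E k u v" by fact
  fix y assume "walk_of_len V E y u v"
  then show "k \<le> y" using assms(2) not_le by blast
qed

lemma walk1: "walk_of_len V E (Suc 0) u v \<longleftrightarrow> u \<in> V \<and> v \<in> V \<and> E u v"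
  by auto

lemma walk2: "walk_of_len V E 2 u v \<longleftrightarrow> u \<in> V \<and> v \<in> V \<and> (\<exists>x\<in>V. E u x \<and> E x v)"
  by (auto simp: numeral_2_eq_2)

lemma less3: "j < (3::nat) \<longleftrightarrow> j = 0 \<or> j = Suc 0 \<or> j = 2" by auto
lemma less2: "j < (2::nat) \<longleftrightarrow> j = 0 \<or> j = Suc 0" by auto

lemma gdist_dd:
  assumes m: "2 \<le> m" and n: "3 \<le> n" and u: "u \<in> VV m n" and w: "w \<in> VV m n"
  shows "gdist (VV m n) EE u w = dd m u w"
proof -
  obtain a b where ab: "u = (a, b)" by (cases u)
  obtain c d where cd: "w = (c, d)" by (cases w)
  have a: "a < m" and b: "b < n" and c: "c < m" and d: "d < n" using u w ab cd by auto
  show ?thesis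
  proof (cases "u = w")
    case True then show ?thesis unfolding dd_def by (intro gdist_eqI) (use u in auto)
  next
    case uw: False
    show ?thesis
    proof (cases "a \<noteq> c \<and> b \<noteq> d")
      case True
      then show ?thesis unfolding dd_def using uw ab cd
        by (intro gdist_eqI) (use u w in auto)
    next
      case nadj: False
      show ?thesis
      proof (cases "a = c")
        case True
        then have bd: "b \<noteq> d" using uw ab cd by auto
        obtain x where x: "x < m" "x \<noteq> a" using other1[OF m] by blast
        obtain y where y: "y < n" "y \<noteq> b" "y \<noteq> d" using other1b[OF n] by blast
        have "walk_of_len (VV m n) EE 2 u w"
          unfolding walk2 using u w ab cd x y True bd by (intro conjI bexI[of _ "(x,y)"]) auto
        moreover have "\<not> walk_of_len (VV m n) EE j u w" if "j < 2" for j
          using that uw True ab cd unfolding less2 by auto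
        ultimately show ?thesis unfolding dd_def using uw True ab cd by (intro gdist_eqI) auto
      next
        case False
        then have bd: "b = d" using nadj by auto
        show ?thesis
        proof (cases "m = 2")
          case m2: True
          obtain y where y: "y < n" "y \<noteq> b" using other1b[OF n] by blast
          obtain z where z: "z < n" "z \<noteq> b" "z \<noteq> y" using other1b[OF n] by blast
          have "walk_of_len (VV m n) EE 3 u w"
          proof -
            have "walk_of_len (VV m n) EE 2 (c,y) w"
              unfolding walk2 using cd a c y z False bd b
              by (intro conjI bexI[of _ "(a,z)"]) auto
            then have "walk_of_len (VV m n) EE (Suc 2) u w"
              unfolding walk_of_len.simps(2) using ab a b c y False
              by (intro conjI bexI[of _ "(c,y)"]) auto
            then show ?thesis by (simp add: numeral_3_eq_3)
          qed
          moreover have "\<not> walk_of_len (VV m n) EE j u w" if "j < 3" for j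
          proof -
            have "\<not> walk_of_len (VV m n) EE 2 u w"
            proof
              assume "walk_of_len (VV m n) EE 2 u w"
              then obtain x where "x \<in> VV m n" "EE u x" "EE x w" unfolding walk2 by blast
              then show False using ab cd a c m2 False by auto
            qed
            then show ?thesis using that uw False bd ab cd unfolding less3 by auto
          qed
          ultimately show ?thesis unfolding dd_def using uw False m2 bd ab cd by (intro gdist_eqI) auto
        next
          case m3: False
          then have m3: "3 \<le> m" using m by auto
          obtain x where x: "x < m" "x \<noteq> a" "x \<noteq> c" using other1b[OF m3] by blast
          obtain y where y: "y < n" "y \<noteq> b" using other1b[OF n] by blast
          have "walk_of_len (VV m n) EE 2 u w"
            unfolding walk2 using u w ab cd x y bd by (intro conjI bexI[of _ "(x,y)"]) auto
          moreover have "\<not> walk_of_len (VV m n) EE j u w" if "j < 2" for j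
            using that uw False bd ab cd unfolding less2 by auto
          ultimately show ?thesis unfolding dd_def using uw False m3 bd ab cd by (intro gdist_eqI) auto
        qed
      qed
    qed
  qed
qed



definition isoP :: "(nat \<times> nat) set \<Rightarrow> nat \<times> nat \<Rightarrow> bool" where
  "isoP W w \<longleftrightarrow> w \<in> W \<and> (\<forall>x\<in>W. fst x = fst w \<longrightarrow> x = w) \<and> (\<forall>x\<in>W. snd x = snd w \<longrightarrow> x = w)"

definition rowE :: "nat \<Rightarrow> (nat \<times> nat) set \<Rightarrow> nat \<Rightarrow> bool" where
  "rowE m W a \<longleftrightarrow> a < m \<and> (\<forall>x\<in>W. fst x \<noteq> a)"

definition colE :: "nat \<Rightarrow> (nat \<times> nat) set \<Rightarrow> nat \<Rightarrow> bool" where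
  "colE n W b \<longleftrightarrow> b < n \<and> (\<forall>x\<in>W. snd x \<noteq> b)"

definition good :: "nat \<Rightarrow> nat \<Rightarrow> (nat \<times> nat) set \<Rightarrow> bool" where
  "good m n W \<longleftrightarrow> W \<subseteq> VV m n \<and> (\<forall>a c. rowE m W a \<longrightarrow> rowE m W c \<longrightarrow> a = c)
     \<and> (\<forall>b d. colE n W b \<longrightarrow> colE n W d \<longrightarrow> b = d)
     \<and> (\<forall>w w'. isoP W w \<longrightarrow> isoP W w' \<longrightarrow> w = w')
     \<and> (\<forall>w a b. isoP W w \<longrightarrow> rowE m W a \<longrightarrow> colE n W b \<longrightarrow> False)"

definition rt :: "nat \<times> nat \<Rightarrow> nat \<times> nat \<Rightarrow> nat" where
  "rt u w = (if u = w then 0 else if fst u \<noteq> fst w \<and> snd u \<noteq> snd w then 1 else 2)"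

lemma rowE_I: "c < m \<Longrightarrow> (\<And>x. x \<in> W \<Longrightarrow> fst x = c \<Longrightarrow> False) \<Longrightarrow> rowE m W c"
  unfolding rowE_def by blast
lemma colE_I: "c < n \<Longrightarrow> (\<And>x. x \<in> W \<Longrightarrow> snd x = c \<Longrightarrow> False) \<Longrightarrow> colE n W c"
  unfolding colE_def by blast

lemma dd_rt: "dd m u w = dd m v w \<Longrightarrow> rt u w = rt v w"
  unfolding dd_def rt_def by (auto split: if_splits)

lemma good_rook:
  assumes g: "good m n W" and u: "u \<in> VV m n" and v: "v \<in> VV m n"
    and eq: "\<forall>w\<in>W. rt u w = rt v w"
  shows "u = v"
proof (rule ccontr)
  assume uv: "u \<noteq> v"
  have uW: "u \<notin> W"
  proof
    assume "u \<in> W" then have "rt v u = rt u u" using eq by auto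
    then have "rt v u = 0" by (simp add: rt_def)
    then show False using uv by (auto simp: rt_def split: if_splits)
  qed
  have vW: "v \<notin> W"
  proof
    assume "v \<in> W" then have "rt u v = rt v v" using eq by auto
    then have "rt u v = 0" by (simp add: rt_def)
    then show False using uv by (auto simp: rt_def split: if_splits)
  qed
  obtain a b where ab: "u = (a, b)" by (cases u)
  obtain c d where cd: "v = (c, d)" by (cases v)
  have WV: "W \<subseteq> VV m n" using g by (simp add: good_def)
  have gA: "\<forall>a c. rowE m W a \<longrightarrow> rowE m W c \<longrightarrow> a = c"
    using g unfolding good_def by (elim conjE) assumption
  have gB: "\<forall>b d. colE n W b \<longrightarrow> colE n W d \<longrightarrow> b = d"
    using g unfolding good_def by (elim conjE) assumption
  have gD: "\<forall>w w'. isoP W w \<longrightarrow> isoP W w' \<longrightarrow> w = w'"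
    using g unfolding good_def by (elim conjE) assumption
  have gC: "\<forall>w a b. isoP W w \<longrightarrow> rowE m W a \<longrightarrow> colE n W b \<longrightarrow> False"
    using g unfolding good_def by (elim conjE) assumption
  show False
  proof (cases "a = c")
    case True
    then have bd: "b \<noteq> d" using uv ab cd by auto
    have "\<not> (colE n W b \<and> colE n W d)" using gB bd by blast
    then obtain x where x: "x \<in> W" "snd x = b \<or> snd x = d" using u v ab cd unfolding colE_def by auto
    from x(2) show False
    proof
      assume "snd x = b"
      moreover have "fst x \<noteq> a" using x uW ab \<open>snd x = b\<close> by (cases x) auto
      ultimately have "rt u x = 2" "rt v x = 1" using ab cd True bd by (auto simp: rt_def prod_eq_iff)
      then show False using eq x by auto
    next
      assume "snd x = d"
      moreover have "fst x \<noteq> a" using x vW cd True \<open>snd x = d\<close> by (cases x) auto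
      ultimately have "rt u x = 1" "rt v x = 2" using ab cd True bd by (auto simp: rt_def prod_eq_iff)
      then show False using eq x by auto
    qed
  next
    case ac: False
    show ?thesis
    proof (cases "b = d")
      case True
      have "\<not> (rowE m W a \<and> rowE m W c)" using gA ac by blast
      then obtain x where x: "x \<in> W" "fst x = a \<or> fst x = c" using u v ab cd unfolding rowE_def by auto
      from x(2) show False
      proof
        assume "fst x = a"
        moreover have "snd x \<noteq> b" using x uW ab \<open>fst x = a\<close> by (cases x) auto
        ultimately have "rt u x = 2" "rt v x = 1" using ab cd True ac by (auto simp: rt_def prod_eq_iff)
        then show False using eq x by auto
      next
        assume "fst x = c"
        moreover have "snd x \<noteq> b" using x vW cd True \<open>fst x = c\<close> by (cases x) auto
        ultimately have "rt u x = 1" "rt v x = 2" using ab cd True ac by (auto simp: rt_def prod_eq_iff)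
        then show False using eq x by auto
      qed
    next
      case bd: False
      have key: "x = (a, d) \<or> x = (c, b)" if "x \<in> W" "fst x = a \<or> fst x = c \<or> snd x = b \<or> snd x = d" for x
      proof -
        have "rt u x = rt v x" using eq that by auto
        then show ?thesis using that ab cd ac bd uW vW
          by (cases x) (auto simp: rt_def split: if_splits)
      qed
      have ra: "x = (a, d)" if "x \<in> W" "fst x = a" for x using key[OF that(1)] that(2) ac by auto
      have rc: "x = (c, b)" if "x \<in> W" "fst x = c" for x using key[OF that(1)] that(2) ac by auto
      have cb: "x = (c, b)" if "x \<in> W" "snd x = b" for x using key[OF that(1)] that(2) bd by auto
      have cd': "x = (a, d)" if "x \<in> W" "snd x = d" for x using key[OF that(1)] that(2) bd by auto
      have isoad: "isoP W (a, d)" if "(a, d) \<in> W"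
        unfolding isoP_def fst_conv snd_conv using that ra cd' by blast
      have isocb: "isoP W (c, b)" if "(c, b) \<in> W"
        unfolding isoP_def fst_conv snd_conv using that rc cb by blast
      have a': "a < m" and b': "b < n" and c': "c < m" and d': "d < n" using u v ab cd by auto
      show False
      proof (cases "(a, d) \<in> W")
        case adW: True
        show False
        proof (cases "(c, b) \<in> W")
          case True
          then show False using gD[rule_format, OF isoad[OF adW] isocb[OF True]] ac by simp
        next
          case False
          have "rowE m W c" by (rule rowE_I[OF c']) (metis rc False)
          moreover have "colE n W b" by (rule colE_I[OF b']) (metis cb False)
          ultimately show False using gC[rule_format, OF isoad[OF adW]] by blast
        qed
      next
        case adW: False
        show False
        proof (cases "(c, b) \<in> W")
          case True
          have "rowE m W a" by (rule rowE_I[OF a']) (metis ra adW)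
          moreover have "colE n W d" by (rule colE_I[OF d']) (metis cd' adW)
          ultimately show False using gC[rule_format, OF isocb[OF True]] by blast
        next
          case False
          have "rowE m W a" by (rule rowE_I[OF a']) (metis ra adW)
          moreover have "rowE m W c" by (rule rowE_I[OF c']) (metis rc False)
          ultimately show False using gA ac by blast
        qed
      qed
    qed
  qed
qed

lemma good_resolving:
  assumes m: "2 \<le> m" and n: "3 \<le> n" and g: "good m n W"
  shows "resolving_set (VV m n) EE W"
  unfolding resolving_set_def
proof (intro conjI ballI impI)
  show WV: "W \<subseteq> VV m n" using g by (simp add: good_def)
  fix u v assume u: "u \<in> VV m n" and v: "v \<in> VV m n"
    and eq: "\<forall>w\<in>W. gdist (VV m n) EE u w = gdist (VV m n) EE v w"
  have "\<forall>w\<in>W. rt u w = rt v w"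
  proof
    fix w assume w: "w \<in> W"
    then have wV: "w \<in> VV m n" using WV by auto
    have "dd m u w = dd m v w" using eq w gdist_dd[OF m n u wV] gdist_dd[OF m n v wV] by simp
    then show "rt u w = rt v w" by (rule dd_rt)
  qed
  then show "u = v" using good_rook[OF g u v] by blast
qed



lemma res_dd:
  assumes m: "2 \<le> m" and n: "3 \<le> n" and r: "resolving_set (VV m n) EE W"
    and u: "u \<in> VV m n" and v: "v \<in> VV m n" and eq: "\<forall>w\<in>W. dd m u w = dd m v w"
  shows "u = v"
proof -
  have WV: "W \<subseteq> VV m n" by (rule conjunct1[OF r[unfolded resolving_set_def]])
  have "\<forall>w\<in>W. gdist (VV m n) EE u w = gdist (VV m n) EE v w"
  proof
    fix w assume w: "w \<in> W"
    then have wV: "w \<in> VV m n" using WV by auto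
    have e: "dd m u w = dd m v w" by (rule bspec[OF eq w])
    show "gdist (VV m n) EE u w = gdist (VV m n) EE v w"
      unfolding gdist_dd[OF m n u wV] gdist_dd[OF m n v wV] by (rule e)
  qed
  then show ?thesis using mp[OF bspec[OF bspec[OF conjunct2[OF r[unfolded resolving_set_def]] u] v]] by blast
qed

lemma res_col:
  assumes m: "2 \<le> m" and n: "3 \<le> n" and r: "resolving_set (VV m n) EE W"
    and b: "colE n W b" and d: "colE n W d"
  shows "b = d"
proof -
  have "(0, b) = (0::nat, d)"
  proof (rule res_dd[OF m n r])
    show "(0, b) \<in> VV m n" "(0, d) \<in> VV m n" using m b d by (auto simp: colE_def)
    show "\<forall>w\<in>W. dd m (0, b) w = dd m (0, d) w"
    proof
      fix w assume "w \<in> W"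
      then have "snd w \<noteq> b" "snd w \<noteq> d" using b d by (auto simp: colE_def)
      then show "dd m (0, b) w = dd m (0, d) w" by (auto simp: dd_def prod_eq_iff)
    qed
  qed
  then show ?thesis by simp
qed

lemma res_row:
  assumes m: "3 \<le> m" and n: "3 \<le> n" and r: "resolving_set (VV m n) EE W"
    and a: "rowE m W a" and c: "rowE m W c"
  shows "a = c"
proof -
  have m2: "2 \<le> m" using m by simp
  have "(a, 0) = (c, 0::nat)"
  proof (rule res_dd[OF m2 n r])
    show "(a, 0) \<in> VV m n" "(c, 0) \<in> VV m n" using n a c by (auto simp: rowE_def)
    show "\<forall>w\<in>W. dd m (a, 0) w = dd m (c, 0) w"
    proof
      fix w assume "w \<in> W"
      then have "fst w \<noteq> a" "fst w \<noteq> c" using a c by (auto simp: rowE_def)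
      then show "dd m (a, 0) w = dd m (c, 0) w" using m by (auto simp: dd_def prod_eq_iff)
    qed
  qed
  then show ?thesis by simp
qed

lemma cross_pair:
  assumes m: "3 \<le> m" and n: "3 \<le> n" and r: "resolving_set (VV m n) EE W"
    and ac: "a \<noteq> c" and bd: "b \<noteq> d" and V: "(a, b) \<in> VV m n" "(c, d) \<in> VV m n"
    and oth: "\<And>x. x \<in> W \<Longrightarrow> x \<noteq> (a, d) \<Longrightarrow> x \<noteq> (c, b) \<Longrightarrow>
                 fst x \<noteq> a \<and> fst x \<noteq> c \<and> snd x \<noteq> b \<and> snd x \<noteq> d"
  shows False
proof -
  have m2: "2 \<le> m" using m by simp
  have "(a, b) = (c, d)"
  proof (rule res_dd[OF m2 n r V])
    show "\<forall>w\<in>W. dd m (a, b) w = dd m (c, d) w"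
    proof
      fix w assume w: "w \<in> W"
      show "dd m (a, b) w = dd m (c, d) w"
      proof (cases "w = (a, d) \<or> w = (c, b)")
        case True then show ?thesis using ac bd m by (auto simp: dd_def)
      next
        case False
        then have "fst w \<noteq> a \<and> fst w \<noteq> c \<and> snd w \<noteq> b \<and> snd w \<noteq> d" using oth w by blast
        then show ?thesis by (auto simp: dd_def prod_eq_iff)
      qed
    qed
  qed
  then show False using ac by simp
qed

lemma iso_avoid: "isoP W (a, d) \<Longrightarrow> x \<in> W \<Longrightarrow> x \<noteq> (a, d) \<Longrightarrow> fst x \<noteq> a \<and> snd x \<noteq> d"
  unfolding isoP_def by (metis fst_conv snd_conv)

lemma res_good:
  assumes m: "3 \<le> m" and n: "3 \<le> n" and r: "resolving_set (VV m n) EE W"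
  shows "good m n W"
  unfolding good_def
proof (intro conjI allI impI)
  show WV: "W \<subseteq> VV m n" by (rule conjunct1[OF r[unfolded resolving_set_def]])
  show "a = c" if "rowE m W a" "rowE m W c" for a c using res_row[OF m n r that] .
  show "b = d" if "colE n W b" "colE n W d" for b d using res_col[OF _ n r that] m by simp
  show "w = w'" if iw: "isoP W w" and iw': "isoP W w'" for w w'
  proof (rule ccontr)
    assume ne: "w \<noteq> w'"
    obtain a d where w: "w = (a, d)" by (cases w)
    obtain c b where w': "w' = (c, b)" by (cases w')
    have wW: "w \<in> W" "w' \<in> W" using iw iw' by (auto simp: isoP_def)
    have "fst w' \<noteq> a \<and> snd w' \<noteq> d" using iso_avoid[of W a d w'] iw wW ne w by simp
    then have ac: "a \<noteq> c" and bd: "b \<noteq> d" using w' by auto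
    have V: "(a, b) \<in> VV m n" "(c, d) \<in> VV m n" using wW WV w w' by auto
    show False
    proof (rule cross_pair[OF m n r ac bd V])
      fix x assume x: "x \<in> W" "x \<noteq> (a, d)" "x \<noteq> (c, b)"
      then show "fst x \<noteq> a \<and> fst x \<noteq> c \<and> snd x \<noteq> b \<and> snd x \<noteq> d"
        using iso_avoid[of W a d x] iso_avoid[of W c b x] iw iw' w w' by simp
    qed
  qed
  show False if iw: "isoP W w" and ra: "rowE m W c" and cb: "colE n W b" for w c b
  proof -
    obtain a d where w: "w = (a, d)" by (cases w)
    have wW: "w \<in> W" using iw by (auto simp: isoP_def)
    have ac: "a \<noteq> c" using ra wW w by (auto simp: rowE_def)
    have bd: "b \<noteq> d" using cb wW w by (auto simp: colE_def)
    have V: "(a, b) \<in> VV m n" "(c, d) \<in> VV m n" using wW WV w ra cb by (auto simp: rowE_def colE_def)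
    show False
    proof (rule cross_pair[OF m n r ac bd V])
      fix x assume x: "x \<in> W" "x \<noteq> (a, d)" "x \<noteq> (c, b)"
      then show "fst x \<noteq> a \<and> fst x \<noteq> c \<and> snd x \<noteq> b \<and> snd x \<noteq> d"
        using iso_avoid[of W a d x] iw w ra cb unfolding rowE_def colE_def by simp
    qed
  qed
qed



lemma sum_inv_card:
  fixes f :: "'a \<Rightarrow> 'b"
  assumes fin: "finite W"
  shows "(\<Sum>w\<in>W. 1 / real (card {x\<in>W. f x = f w})) = real (card (f ` W))"
proof -
  have "(\<Sum>w\<in>W. 1 / real (card {x\<in>W. f x = f w}))
      = (\<Sum>y\<in>f ` W. \<Sum>w\<in>{x. x \<in> W \<and> f x = y}. 1 / real (card {x\<in>W. f x = f w}))"
    by (rule sum.image_gen[OF fin])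
  also have "\<dots> = (\<Sum>y\<in>f ` W. 1)"
  proof (rule sum.cong[OF refl])
    fix y assume y: "y \<in> f ` W"
    let ?S = "{x \<in> W. f x = y}"
    have fS: "finite ?S" using fin by simp
    have ne: "?S \<noteq> {}" using y by auto
    then have pos: "card ?S > 0" using fS by (simp add: card_gt_0_iff)
    have "(\<Sum>w\<in>{x. x \<in> W \<and> f x = y}. 1 / real (card {x\<in>W. f x = f w}))
        = (\<Sum>w\<in>?S. 1 / real (card ?S))"
      by (rule sum.cong) auto
    also have "\<dots> = 1" using pos by simp
    finally show "(\<Sum>w\<in>{x. x \<in> W \<and> f x = y}. 1 / real (card {x\<in>W. f x = f w})) = 1" .
  qed
  also have "\<dots> = real (card (f ` W))" by simp
  finally show ?thesis .
qed

lemma card_ge2: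
  assumes fin: "finite W" and w: "w \<in> W" and x: "x \<in> W" "x \<noteq> w" "f x = f w"
  shows "2 \<le> card {y\<in>W. f y = f w}"
proof -
  have "{w, x} \<subseteq> {y\<in>W. f y = f w}" using w x by auto
  then have "card {w, x} \<le> card {y\<in>W. f y = f w}" by (rule card_mono[rotated]) (use fin in simp)
  then show ?thesis using x by simp
qed

lemma card_ge1:
  assumes fin: "finite W" and w: "w \<in> W"
  shows "1 \<le> card {y\<in>W. f y = f w}"
proof -
  have "{y\<in>W. f y = f w} \<noteq> {}" using w by auto
  then show ?thesis using fin by (simp add: Suc_le_eq card_gt_0_iff)
qed

lemma term_bound:
  assumes fin: "finite W" and w: "w \<in> W"
  shows "1 / real (card {x\<in>W. fst x = fst w}) + 1 / real (card {x\<in>W. snd x = snd w})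
          \<le> 3/2 + (if isoP W w then 1/2 else 0)"
proof -
  let ?r = "card {x\<in>W. fst x = fst w}" and ?c = "card {x\<in>W. snd x = snd w}"
  have r1: "1 \<le> ?r" by (rule card_ge1[OF fin w])
  have c1: "1 \<le> ?c" by (rule card_ge1[OF fin w])
  have ir: "1 / real ?r \<le> 1" using r1 by simp
  have ic: "1 / real ?c \<le> 1" using c1 by simp
  show ?thesis
  proof (cases "isoP W w")
    case True then show ?thesis using ir ic by simp
  next
    case False
    then obtain x where x: "x \<in> W" "x \<noteq> w" "fst x = fst w \<or> snd x = snd w"
      using w unfolding isoP_def by blast
    from x(3) show ?thesis
    proof
      assume "fst x = fst w"
      then have "2 \<le> ?r" using card_ge2[OF fin w x(1,2)] by blast
      then have "1 / real ?r \<le> 1/2" by (simp add: field_simps)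
      then show ?thesis using ic False by simp
    next
      assume "snd x = snd w"
      then have "2 \<le> ?c" using card_ge2[OF fin w x(1,2)] by blast
      then have "1 / real ?c \<le> 1/2" by (simp add: field_simps)
      then show ?thesis using ir False by simp
    qed
  qed
qed

lemma count_main:
  assumes fin: "finite W"
  shows "2 * (card (fst ` W) + card (snd ` W)) \<le> 3 * card W + card {w\<in>W. isoP W w}"
proof -
  have "real (card (fst ` W)) + real (card (snd ` W))
      = (\<Sum>w\<in>W. 1 / real (card {x\<in>W. fst x = fst w}) + 1 / real (card {x\<in>W. snd x = snd w}))"
    using sum_inv_card[OF fin, of fst] sum_inv_card[OF fin, of snd] by (simp add: sum.distrib)
  also have "\<dots> \<le> (\<Sum>w\<in>W. 3/2 + (if isoP W w then 1/2 else 0))"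
    by (rule sum_mono) (rule term_bound[OF fin])
  also have "\<dots> = 3/2 * real (card W) + (\<Sum>w\<in>W. (if isoP W w then 1/2 else 0))"
    by (simp add: sum.distrib)
  also have "(\<Sum>w\<in>W. (if isoP W w then 1/2 else 0)) = (\<Sum>w\<in>{w\<in>W. isoP W w}. (1/2::real))"
    by (rule sum.inter_filter[OF fin, symmetric])
  also have "\<dots> = 1/2 * real (card {w\<in>W. isoP W w})" by simp
  finally have "2 * (real (card (fst ` W)) + real (card (snd ` W)))
      \<le> 3 * real (card W) + real (card {w\<in>W. isoP W w})" by simp
  then have "real (2 * (card (fst ` W) + card (snd ` W))) \<le> real (3 * card W + card {w\<in>W. isoP W w})"
    by simp
  then show ?thesis by (simp only: of_nat_le_iff)
qed

lemma good_count:
  assumes g: "good m n W"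
  shows "2 * (m + n) \<le> 3 * card W + 4"
proof -
  have WV: "W \<subseteq> VV m n" using g unfolding good_def by (elim conjE)
  have gA: "\<forall>a c. rowE m W a \<longrightarrow> rowE m W c \<longrightarrow> a = c"
    using g unfolding good_def by (elim conjE) assumption
  have gB: "\<forall>b d. colE n W b \<longrightarrow> colE n W d \<longrightarrow> b = d"
    using g unfolding good_def by (elim conjE) assumption
  have gD: "\<forall>w w'. isoP W w \<longrightarrow> isoP W w' \<longrightarrow> w = w'"
    using g unfolding good_def by (elim conjE) assumption
  have gC: "\<forall>w a b. isoP W w \<longrightarrow> rowE m W a \<longrightarrow> colE n W b \<longrightarrow> False"
    using g unfolding good_def by (elim conjE) assumption
  have fin: "finite W" using WV finite_subset by blast
  define Zr where "Zr = {..<m} - fst ` W"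
  define Zc where "Zc = {..<n} - snd ` W"
  define I where "I = {w\<in>W. isoP W w}"
  have rZ: "rowE m W a" if "a \<in> Zr" for a using that unfolding Zr_def rowE_def by force
  have cZ: "colE n W b" if "b \<in> Zc" for b using that unfolding Zc_def colE_def by force
  have sr: "fst ` W \<subseteq> {..<m}" using WV by force
  have sc: "snd ` W \<subseteq> {..<n}" using WV by force
  have cr: "card (fst ` W) \<le> m" using card_mono[OF _ sr] by simp
  have cc: "card (snd ` W) \<le> n" using card_mono[OF _ sc] by simp
  have m_eq: "m = card (fst ` W) + card Zr"
    unfolding Zr_def using card_Diff_subset[OF finite_imageI[OF fin] sr] cr by simp
  have n_eq: "n = card (snd ` W) + card Zc"
    unfolding Zc_def using card_Diff_subset[OF finite_imageI[OF fin] sc] cc by simp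
  have fZr: "finite Zr" and fZc: "finite Zc" and fI: "finite I"
    unfolding Zr_def Zc_def I_def using fin by auto
  have zr: "card Zr \<le> 1"
    unfolding One_nat_def card_le_Suc0_iff_eq[OF fZr]
    using gA rZ by blast
  have zc: "card Zc \<le> 1"
    unfolding One_nat_def card_le_Suc0_iff_eq[OF fZc]
    using gB cZ by blast
  have ci: "card I \<le> 1"
    unfolding One_nat_def card_le_Suc0_iff_eq[OF fI]
  proof (intro ballI)
    fix x y assume "x \<in> I" "y \<in> I"
    then have "isoP W x" "isoP W y" unfolding I_def by auto
    then show "x = y" using gD by blast
  qed
  have main: "2 * (card (fst ` W) + card (snd ` W)) \<le> 3 * card W + card I"
    unfolding I_def by (rule count_main[OF fin])
  have e: "2*(m+n) = 2*(card (fst ` W) + card (snd ` W)) + 2*card Zr + 2*card Zc"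
    using m_eq n_eq by simp
  show ?thesis
  proof (cases "I = {}")
    case True
    then have "card I = 0" by simp
    then show ?thesis using e main zr zc by linarith
  next
    case False
    then obtain w where w: "w \<in> I" by blast
    then have iw: "isoP W w" unfolding I_def by auto
    have "Zr = {} \<or> Zc = {}"
    proof (rule ccontr)
      assume "\<not> (Zr = {} \<or> Zc = {})"
      then obtain a b where "a \<in> Zr" "b \<in> Zc" by blast
      then show False using gC iw rZ cZ by blast
    qed
    then have "card Zr + card Zc \<le> 1" using zr zc by auto
    then show ?thesis using e main ci by linarith
  qed
qed



lemma good_intro:
  assumes "W \<subseteq> VV m n"
    and "\<And>a. rowE m W a \<Longrightarrow> a = ra"
    and "\<And>b. colE n W b \<Longrightarrow> b = cb"
    and "\<And>w w'. isoP W w \<Longrightarrow> isoP W w' \<Longrightarrow> w = w'"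
    and "\<And>w a b. isoP W w \<Longrightarrow> rowE m W a \<Longrightarrow> colE n W b \<Longrightarrow> False"
  shows "good m n W"
  unfolding good_def
proof (intro conjI allI impI)
  show "W \<subseteq> VV m n" by fact
  fix a c assume "rowE m W a" "rowE m W c"
  then show "a = c" using assms(2) by metis
next
  fix b d assume "colE n W b" "colE n W d"
  then show "b = d" using assms(3) by metis
next
  fix w w' assume "isoP W w" "isoP W w'"
  then show "w = w'" using assms(4) by metis
next
  fix w a b assume "isoP W w" "rowE m W a" "colE n W b"
  then show False using assms(5) by metis
qed

lemma iso_rowD:
  assumes "isoP W w" "x \<in> W" "fst x = fst w" shows "x = w"
proof -
  have h: "\<forall>x\<in>W. fst x = fst w \<longrightarrow> x = w" using assms(1) unfolding isoP_def by (elim conjE)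
  show ?thesis by (rule mp[OF bspec[OF h assms(2)] assms(3)])
qed

lemma iso_colD:
  assumes "isoP W w" "x \<in> W" "snd x = snd w" shows "x = w"
proof -
  have h: "\<forall>x\<in>W. snd x = snd w \<longrightarrow> x = w" using assms(1) unfolding isoP_def by (elim conjE)
  show ?thesis by (rule mp[OF bspec[OF h assms(2)] assms(3)])
qed

lemma iso_mem: "isoP W w \<Longrightarrow> w \<in> W" unfolding isoP_def by (elim conjE)

definition f3 :: "nat \<Rightarrow> nat \<Rightarrow> nat \<times> nat" where
  "f3 m j = (min (j div 2) (m - 1), j)"

lemma constr3:
  assumes m: "2 \<le> m" and n: "2 * m - 1 \<le> n"
  shows "good m n (f3 m ` {..<n-1}) \<and> card (f3 m ` {..<n-1}) = n - 1"
proof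
  let ?W = "f3 m ` {..<n-1}"
  have inj: "inj_on (f3 m) {..<n-1}" unfolding inj_on_def f3_def by auto
  then show "card ?W = n - 1" by (simp add: card_image)
  have rowcov: "\<exists>x\<in>?W. fst x = a" if "a < m - 1" for a
  proof
    show "f3 m (2 * a) \<in> ?W" using that m n by auto
    show "fst (f3 m (2 * a)) = a" using that by (simp add: f3_def)
  qed
  have m1cov: "\<exists>x\<in>?W. fst x = m - 1" if "\<exists>x\<in>?W. fst x = m - 1" using that .
  show "good m n ?W"
  proof (rule good_intro[where ra = "m - 1" and cb = "n - 1"])
    show "?W \<subseteq> VV m n" using m n by (auto simp: f3_def)
    show "a = m - 1" if "rowE m ?W a" for a
    proof -
      have "\<not> a < m - 1" using rowcov that unfolding rowE_def by metis
      moreover have "a < m" using that unfolding rowE_def by simp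
      ultimately show ?thesis by linarith
    qed
    show "b = n - 1" if "colE n ?W b" for b
    proof -
      have "\<not> b < n - 1"
      proof
        assume "b < n - 1"
        then have "f3 m b \<in> ?W" by simp
        moreover have "snd (f3 m b) = b" by (simp add: f3_def)
        ultimately show False using that unfolding colE_def by metis
      qed
      moreover have "b < n" using that unfolding colE_def by simp
      ultimately show ?thesis by linarith
    qed
    have isorow: "fst w = m - 1" if iw: "isoP ?W w" for w
    proof (rule ccontr)
      assume ne: "fst w \<noteq> m - 1"
      have wW: "w \<in> ?W" using iw by (rule iso_mem)
      then obtain j where j: "j < n - 1" "w = f3 m j" by blast
      have jm: "j div 2 < m - 1" using ne j by (simp add: f3_def)
      define j' where "j' = (if even j then j + 1 else j - 1)"
      have j'd: "j' div 2 = j div 2" unfolding j'_def by (auto elim: evenE oddE)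
      have j'ne: "j' \<noteq> j" unfolding j'_def by (auto elim: oddE)
      have "j' \<le> 2 * (j div 2) + 1" unfolding j'_def by (auto elim: evenE oddE)
      then have j'n: "j' < n - 1" using jm m n by linarith
      have "f3 m j' \<in> ?W" using j'n by simp
      moreover have "fst (f3 m j') = fst w" using j j'd by (simp add: f3_def)
      moreover have "f3 m j' \<noteq> w" using j j'ne by (simp add: f3_def)
      ultimately show False using iso_rowD[OF iw] by metis
    qed
    show "w = w'" if iw: "isoP ?W w" and iw': "isoP ?W w'" for w w'
    proof -
      have "w' \<in> ?W" using iw' by (rule iso_mem)
      moreover have "fst w' = fst w" using isorow[OF iw] isorow[OF iw'] by simp
      ultimately show ?thesis using iso_rowD[OF iw] by metis
    qed
    show False if iw: "isoP ?W w" and ra: "rowE m ?W a" and "colE n ?W b" for w a b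
    proof -
      have wW: "w \<in> ?W" using iw by (rule iso_mem)
      have "\<not> a < m - 1" using rowcov ra unfolding rowE_def by metis
      moreover have "a < m" using ra unfolding rowE_def by simp
      ultimately have "a = fst w" using isorow[OF iw] by linarith
      then show False using ra wW unfolding rowE_def by blast
    qed
  qed
qed



definition gg :: "nat \<Rightarrow> nat \<Rightarrow> nat \<times> nat" where
  "gg p i = (if i div 2 < p then (i div 2, 2 * (i div 2) + i mod 2)
             else (p + 2 * (i div 2 - p) + i mod 2, p + i div 2))"

definition hh :: "nat \<Rightarrow> nat \<times> nat \<Rightarrow> nat" where
  "hh p x = (if snd x < 2 * p then snd x else 2 * (snd x - p) + (fst x - p - 2 * (snd x - 2 * p)))"

lemma hh_gg: "hh p (gg p i) = i"
proof (cases "i div 2 < p")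
  case True
  have "i mod 2 < 2" by simp
  then have "2 * (i div 2) + i mod 2 < 2 * p" using True by linarith
  then show ?thesis using True by (simp add: gg_def hh_def)
next
  case False
  have "hh p (gg p i) = 2 * (i div 2) + i mod 2" using False by (simp add: gg_def hh_def)
  also have "\<dots> = i" by simp
  finally show ?thesis .
qed

lemma inj_gg: "inj_on (gg p) A"
  by (rule inj_on_inverseI[where g = "hh p"]) (rule hh_gg)

lemma gg_fst_lt:
  assumes "i < 2 * (p + q)" shows "fst (gg p i) < p + 2 * q" and "snd (gg p i) < 2 * p + q"
proof -
  have r: "i mod 2 < 2" by simp
  have i: "i = 2 * (i div 2) + i mod 2" by simp
  have "fst (gg p i) < p + 2 * q \<and> snd (gg p i) < 2 * p + q"
  proof (cases "i div 2 < p")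
    case True then show ?thesis unfolding gg_def using r by simp
  next
    case False
    have "i div 2 < p + q" using assms by presburger
    then show ?thesis unfolding gg_def using False r assms by auto
  qed
  then show "fst (gg p i) < p + 2 * q" and "snd (gg p i) < 2 * p + q" by auto
qed

lemma gg_last: "gg p (2 * (p + q)) = (p + 2 * q, 2 * p + q)"
  unfolding gg_def by simp

lemma gg_rowcov:
  assumes "a < p + 2 * q" shows "\<exists>i < 2 * (p + q). fst (gg p i) = a"
proof (cases "a < p")
  case True
  then show ?thesis by (intro exI[of _ "2 * a"]) (simp add: gg_def)
next
  case False
  define t where "t = a - p"
  have t: "t < 2 * q" "a = p + t" using assms False unfolding t_def by auto
  define i where "i = 2 * (p + t div 2) + t mod 2"
  have idiv: "i div 2 = p + t div 2" and imod: "i mod 2 = t mod 2" unfolding i_def by auto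
  have "fst (gg p i) = a" unfolding gg_def idiv imod using t by simp
  moreover have "i < 2 * (p + q)" unfolding i_def using t by presburger
  ultimately show ?thesis by blast
qed

lemma gg_colcov:
  assumes "b < 2 * p + q" shows "\<exists>i < 2 * (p + q). snd (gg p i) = b"
proof (cases "b < 2 * p")
  case True
  have "b div 2 < p" using True by linarith
  then have "snd (gg p b) = b" unfolding gg_def by simp
  then show ?thesis using True by (intro exI[of _ b]) simp
next
  case False
  have "snd (gg p (2 * (b - p))) = b" unfolding gg_def using False by simp
  moreover have "2 * (b - p) < 2 * (p + q)" using assms False by presburger
  ultimately show ?thesis by blast
qed

lemma gg_partner:
  assumes "i < 2 * (p + q)"
  shows "\<exists>i' < 2 * (p + q). gg p i' \<noteq> gg p i \<and> (fst (gg p i') = fst (gg p i) \<or> snd (gg p i') = snd (gg p i))"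
proof -
  define i' where "i' = (if even i then i + 1 else i - 1)"
  have d: "i' div 2 = i div 2" unfolding i'_def by (auto elim: evenE oddE)
  have ne: "i' \<noteq> i" unfolding i'_def by (auto elim: oddE)
  have lt: "i' < 2 * (p + q)" using assms unfolding i'_def by presburger
  have "gg p i' \<noteq> gg p i" using ne hh_gg by metis
  moreover have "fst (gg p i') = fst (gg p i) \<or> snd (gg p i') = snd (gg p i)"
    unfolding gg_def d by auto
  ultimately show ?thesis using lt by blast
qed



lemma constrB:
  assumes e: "e \<le> 1" and rm: "p + 2 * q + e \<le> m" and cn: "2 * p + q + e \<le> n"
    and mr: "m \<le> p + 2 * q + e + 1" and nc: "n \<le> 2 * p + q + e + 1"
    and ex: "e = 1 \<longrightarrow> p + 2 * q + e = m \<or> 2 * p + q + e = n"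
  shows "good m n (gg p ` {..<2 * (p + q) + e}) \<and> card (gg p ` {..<2 * (p + q) + e}) = 2 * (p + q) + e"
proof
  let ?W = "gg p ` {..<2 * (p + q) + e}"
  show "card ?W = 2 * (p + q) + e" using inj_gg by (simp add: card_image)
  have bound: "fst x < p + 2 * q + e \<and> snd x < 2 * p + q + e" if xW: "x \<in> ?W" for x
  proof -
    obtain i where i0: "x = gg p i" "i \<in> {..<2 * (p + q) + e}" using xW by (rule imageE)
    then have i: "i < 2 * (p + q) + e" "x = gg p i" by simp_all
    show ?thesis
    proof (cases "i < 2 * (p + q)")
      case True then show ?thesis using gg_fst_lt[OF True] i by auto
    next
      case False
      then have "i = 2 * (p + q)" "e = 1" using i e by auto
      then show ?thesis using i gg_last by simp
    qed
  qed
  have rowc: "\<exists>x\<in>?W. fst x = a" if "a < p + 2 * q + e" for a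
  proof (cases "a < p + 2 * q")
    case True
    then obtain i where "i < 2 * (p + q)" "fst (gg p i) = a" using gg_rowcov by blast
    then show ?thesis by force
  next
    case False
    then have "a = p + 2 * q" "e = 1" using that e by auto
    then have "2 * (p + q) \<in> {..<2 * (p + q) + e}" "fst (gg p (2 * (p + q))) = a"
      using gg_last by auto
    then have "gg p (2 * (p + q)) \<in> ?W" "fst (gg p (2 * (p + q))) = a" by auto
    then show ?thesis by blast
  qed
  have colc: "\<exists>x\<in>?W. snd x = b" if "b < 2 * p + q + e" for b
  proof (cases "b < 2 * p + q")
    case True
    then obtain i where "i < 2 * (p + q)" "snd (gg p i) = b" using gg_colcov by blast
    then show ?thesis by force
  next
    case False
    then have "b = 2 * p + q" "e = 1" using that e by auto
    then have "2 * (p + q) \<in> {..<2 * (p + q) + e}" "snd (gg p (2 * (p + q))) = b"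
      using gg_last by auto
    then have "gg p (2 * (p + q)) \<in> ?W" "snd (gg p (2 * (p + q))) = b" by auto
    then show ?thesis by blast
  qed
  have rowE_eq: "a = p + 2 * q + e" if "rowE m ?W a" for a
  proof -
    have "\<not> a < p + 2 * q + e" using rowc that unfolding rowE_def by metis
    moreover have "a < m" using that unfolding rowE_def by simp
    ultimately show ?thesis using mr by linarith
  qed
  have colE_eq: "b = 2 * p + q + e" if "colE n ?W b" for b
  proof -
    have "\<not> b < 2 * p + q + e" using colc that unfolding colE_def by metis
    moreover have "b < n" using that unfolding colE_def by simp
    ultimately show ?thesis using nc by linarith
  qed
  have isoeq: "w = gg p (2 * (p + q)) \<and> e = 1" if iw: "isoP ?W w" for w
  proof -
    have "w \<in> ?W" by (rule iso_mem[OF iw])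
    then obtain i where i0: "w = gg p i" "i \<in> {..<2 * (p + q) + e}" by (rule imageE)
    then have i: "i < 2 * (p + q) + e" "w = gg p i" by simp_all
    have "\<not> i < 2 * (p + q)"
    proof
      assume lt: "i < 2 * (p + q)"
      obtain i' where i': "i' < 2 * (p + q)" "gg p i' \<noteq> gg p i"
        "fst (gg p i') = fst (gg p i) \<or> snd (gg p i') = snd (gg p i)"
        using gg_partner[OF lt] by blast
      have mem: "gg p i' \<in> ?W" using i' by simp
      from i'(3) show False
      proof
        assume "fst (gg p i') = fst (gg p i)"
        then have "gg p i' = w" using iso_rowD[OF iw mem] i by simp
        then show False using i'(2) i by simp
      next
        assume "snd (gg p i') = snd (gg p i)"
        then have "gg p i' = w" using iso_colD[OF iw mem] i by simp
        then show False using i'(2) i by simp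
      qed
    qed
    then have "i = 2 * (p + q)" "e = 1" using i e by auto
    then show ?thesis using i by simp
  qed
  show "good m n ?W"
  proof (rule good_intro[where ra = "p + 2 * q + e" and cb = "2 * p + q + e"])
    show "?W \<subseteq> VV m n" using bound rm cn by fastforce
    show "a = p + 2 * q + e" if "rowE m ?W a" for a using rowE_eq[OF that] .
    show "b = 2 * p + q + e" if "colE n ?W b" for b using colE_eq[OF that] .
    show "w = w'" if "isoP ?W w" "isoP ?W w'" for w w'
      using isoeq[OF that(1)] isoeq[OF that(2)] by simp
    show False if iw: "isoP ?W w" and ra: "rowE m ?W a" and cb: "colE n ?W b" for w a b
    proof -
      have "e = 1" using isoeq[OF iw] by simp
      then have "p + 2 * q + e = m \<or> 2 * p + q + e = n" using ex by simp
      moreover have "a < m" using ra unfolding rowE_def by simp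
      moreover have "b < n" using cb unfolding colE_def by simp
      ultimately show False using rowE_eq[OF ra] colE_eq[OF cb] by linarith
    qed
  qed
qed

lemma params:
  fixes m n :: nat
  assumes "3 \<le> m" "m \<le> n" "n \<le> 2 * m - 2"
  shows "\<exists>p q e. e \<le> 1 \<and> p + 2 * q + e \<le> m \<and> 2 * p + q + e \<le> n
     \<and> m \<le> p + 2 * q + e + 1 \<and> n \<le> 2 * p + q + e + 1
     \<and> (e = 1 \<longrightarrow> p + 2 * q + e = m \<or> 2 * p + q + e = n)
     \<and> 3 * (2 * (p + q) + e) + 2 \<le> 2 * (m + n)"
proof -
  define t where "t = (m + n) div 3"
  define r where "r = (m + n) mod 3"
  have s: "m + n = 3 * t + r" and r3: "r < 3" unfolding t_def r_def by simp_all
  consider "r = 0" | "r = 1" | "r = 2" using r3 by linarith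
  then show ?thesis
  proof cases
    case 1
    obtain p where p: "p + t + 1 = n" using assms s 1 by (intro that[of "n - t - 1"]) linarith
    obtain q where q: "q + t = m" using assms s 1 by (intro that[of "m - t"]) linarith
    show ?thesis
      by (rule exI[of _ p], rule exI[of _ q], rule exI[of _ 1]) (use s 1 p q in \<open>intro conjI impI disjI1; presburger\<close>)
  next
    case 2
    obtain p where p: "p + t + 1 = n" using assms s 2 by (intro that[of "n - t - 1"]) linarith
    obtain q where q: "q + t = m" using assms s 2 by (intro that[of "m - t"]) linarith
    show ?thesis
      by (rule exI[of _ p], rule exI[of _ q], rule exI[of _ 0]) (use s 2 p q in \<open>intro conjI impI disjI1; presburger\<close>)
  next
    case 3
    obtain p where p: "p + t + 1 = n" using assms s 3 by (intro that[of "n - t - 1"]) linarith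
    obtain q where q: "q + t + 1 = m" using assms s 3 by (intro that[of "m - t - 1"]) linarith
    show ?thesis
      by (rule exI[of _ p], rule exI[of _ q], rule exI[of _ 0]) (use s 3 p q in \<open>intro conjI impI disjI1; presburger\<close>)
  qed
qed



lemma E_eq: "tensor_adj K_adj K_adj = EE"
  by (auto simp: tensor_adj_def K_adj_def fun_eq_iff)

lemma V_eq: "tensor_verts (K_verts m) (K_verts n) = VV m n"
  by (simp add: tensor_verts_def K_verts_def)

lemma par_step: "x \<in> VV 2 2 \<Longrightarrow> y \<in> VV 2 2 \<Longrightarrow> EE x y \<Longrightarrow>
    (fst x + snd x) mod 2 = (fst y + snd y) mod 2"
  by (cases x; cases y) (auto simp: less2)

lemma par_walk: "walk_of_len (VV 2 2) EE k u v \<Longrightarrow> (fst u + snd u) mod 2 = (fst v + snd v) mod 2"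
proof (induction k arbitrary: u)
  case 0 then show ?case by simp
next
  case (Suc k)
  then obtain w where w: "u \<in> VV 2 2" "w \<in> VV 2 2" "EE u w" "walk_of_len (VV 2 2) EE k w v" by auto
  have "(fst u + snd u) mod 2 = (fst w + snd w) mod 2" by (rule par_step[OF w(1,2,3)])
  also have "\<dots> = (fst v + snd v) mod 2" by (rule Suc.IH[OF w(4)])
  finally show ?case .
qed

lemma not_conn: "\<not> graph_connected (VV 2 2) EE"
proof
  assume "graph_connected (VV 2 2) EE"
  then obtain k where "walk_of_len (VV 2 2) EE k (0, 0) (0, 1)"
    unfolding graph_connected_def by force
  then show False using par_walk by fastforce
qed

lemma md_le:
  assumes "finite W" "resolving_set V E W"
  shows "metric_dim V E \<le> card W"
  unfolding metric_dim_def by (rule Least_le) (use assms in blast)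

lemma md_attained:
  assumes "finite W0" "resolving_set V E W0"
  shows "\<exists>W. finite W \<and> card W = metric_dim V E \<and> resolving_set V E W"
  unfolding metric_dim_def by (rule LeastI_ex) (use assms in blast)

lemma res_card_col:
  assumes m: "2 \<le> m" and n: "3 \<le> n" and r: "resolving_set (VV m n) EE W" and fin: "finite W"
  shows "n \<le> card W + 1"
proof -
  define Zc where "Zc = {..<n} - snd ` W"
  have WV: "W \<subseteq> VV m n" by (rule conjunct1[OF r[unfolded resolving_set_def]])
  have sc: "snd ` W \<subseteq> {..<n}" using WV by force
  have cZ: "colE n W b" if "b \<in> Zc" for b using that unfolding Zc_def colE_def by force
  have fZ: "finite Zc" unfolding Zc_def by simp
  have "card Zc \<le> 1"
    unfolding One_nat_def card_le_Suc0_iff_eq[OF fZ]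
    using res_col[OF m n r] cZ by blast
  moreover have "card Zc = n - card (snd ` W)"
    unfolding Zc_def using card_Diff_subset[OF finite_imageI[OF fin] sc] by simp
  moreover have "card (snd ` W) \<le> card W" by (rule card_image_le[OF fin])
  ultimately show ?thesis by linarith
qed

theorem theorem1p1:
  fixes m n :: nat
  defines "V \<equiv> tensor_verts (K_verts m) (K_verts n)"
      and "E \<equiv> tensor_adj K_adj K_adj"
  assumes "m \<ge> 1" and "n \<ge> m"
  shows "(m = 2 \<and> n = 2 \<longrightarrow> \<not> graph_connected V E)
       \<and> (m \<ge> 3 \<and> n \<le> 2 * m - 2 \<longrightarrow>
            int (metric_dim V E) = \<lceil>(2 / 3 :: real) * (real m + real n - 2)\<rceil>)
       \<and> (m \<ge> 2 \<and> n \<ge> 2 * m - 1 \<longrightarrow> metric_dim V E = n - 1)"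
proof (intro conjI impI)
  have VE: "V = VV m n" "E = EE" unfolding V_def E_def V_eq E_eq by simp_all
  show "\<not> graph_connected V E" if "m = 2 \<and> n = 2"
    using that not_conn VE by simp
  show "metric_dim V E = n - 1" if h: "m \<ge> 2 \<and> n \<ge> 2 * m - 1"
  proof -
    have m: "2 \<le> m" and n0: "2 * m - 1 \<le> n" using h by auto
    have n: "3 \<le> n" using m n0 by linarith
    have c3: "good m n (f3 m ` {..<n-1}) \<and> card (f3 m ` {..<n-1}) = n - 1"
      by (rule constr3[OF m n0])
    have res0: "resolving_set (VV m n) EE (f3 m ` {..<n-1})"
      using good_resolving[OF m n] c3 by blast
    have fin0: "finite (f3 m ` {..<n-1})" by simp
    have up: "metric_dim (VV m n) EE \<le> n - 1"
      using md_le[OF fin0 res0] c3 by simp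
    obtain W where W: "finite W" "card W = metric_dim (VV m n) EE" "resolving_set (VV m n) EE W"
      using md_attained[OF fin0 res0] by blast
    have "n \<le> card W + 1" by (rule res_card_col[OF m n W(3) W(1)])
    then show ?thesis using up W(2) VE by simp
  qed
  show "int (metric_dim V E) = \<lceil>(2 / 3 :: real) * (real m + real n - 2)\<rceil>" if h: "m \<ge> 3 \<and> n \<le> 2 * m - 2"
  proof -
    have m: "3 \<le> m" and nn: "n \<le> 2 * m - 2" using h by auto
    have mn: "m \<le> n" by fact
    have m2: "2 \<le> m" and n: "3 \<le> n" using m mn by auto
    obtain p q e where pqe: "e \<le> 1" "p + 2 * q + e \<le> m" "2 * p + q + e \<le> n"
      "m \<le> p + 2 * q + e + 1" "n \<le> 2 * p + q + e + 1"
      "e = 1 \<longrightarrow> p + 2 * q + e = m \<or> 2 * p + q + e = n"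
      "3 * (2 * (p + q) + e) + 2 \<le> 2 * (m + n)"
      using params[OF m mn nn] by blast
    let ?W0 = "gg p ` {..<2 * (p + q) + e}"
    have cB: "good m n ?W0 \<and> card ?W0 = 2 * (p + q) + e"
      by (rule constrB[OF pqe(1-6)])
    have res0: "resolving_set (VV m n) EE ?W0"
      using good_resolving[OF m2 n] cB by blast
    have fin0: "finite ?W0" by simp
    have up: "metric_dim (VV m n) EE \<le> 2 * (p + q) + e"
      using md_le[OF fin0 res0] cB by simp
    obtain W where W: "finite W" "card W = metric_dim (VV m n) EE" "resolving_set (VV m n) EE W"
      using md_attained[OF fin0 res0] by blast
    have "2 * (m + n) \<le> 3 * card W + 4" by (rule good_count[OF res_good[OF m n W(3)]])
    then have lo: "2 * (m + n) \<le> 3 * metric_dim (VV m n) EE + 4" using W(2) by simp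
    define d where "d = metric_dim (VV m n) EE"
    have "3 * d \<le> 3 * (2 * (p + q) + e)" using up unfolding d_def[symmetric] by simp
    then have up3: "3 * d + 2 \<le> 2 * (m + n)" using pqe(7) by linarith
    have "real (2 * (m + n)) \<le> real (3 * d + 4)" using lo unfolding d_def[symmetric] by (simp only: of_nat_le_iff)
    then have lo': "2 * (real m + real n) \<le> 3 * real d + 4" by simp
    have "real (3 * d + 2) \<le> real (2 * (m + n))" using up3 by (simp only: of_nat_le_iff)
    then have up': "3 * real d + 2 \<le> 2 * (real m + real n)" by simp
    have "\<lceil>(2 / 3 :: real) * (real m + real n - 2)\<rceil> = int d"
      by (rule ceiling_unique) (use lo' up' in simp_all)
    then show ?thesis using VE unfolding d_def by simp
  qed
qed


end
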